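(* Let $(R,\mathfrak{m})$ be a Noetherian local ring, $M$ a finitely generated $R$-module and $L$ a submodule of $M$. Let $N$ be an integer with $N>\mathrm{AR}(\mathfrak{m},L\subseteq M)$. If $K$ is a submodule of $M$ such that $L\equiv K \bmod \mathfrak{m}^NM$ (i.e. $L+\mathfrak{m}^NM=K+\mathfrak{m}^NM$), then $L^*\subseteq K^*$.
   Context: The Artin–Rees number $\mathrm{AR}(\mathfrak{m},L\subseteq M)$ is the least integer $s$ such that $\mathfrak{m}^nM\cap L=\mathfrak{m}^{n-s}(\mathfrak{m}^sM\cap L)$ for all $n\ge s$. For a submodule $L\subseteq M$, the initial module $L^*$ is the graded $\mathrm{gr}_{\mathfrak{m}}(R)$-submodule of $\mathrm{gr}_{\mathfrak{m}}(M)=\bigoplus_{i\ge0}\mathfrak{m}^iM/\mathfrak{m}^{i+1}M$ given by the kernel of the natural map $\mathrm{gr}_{\mathfrak{m}}(M)\to\mathrm{gr}_{\mathfrak{m}}(M/L)$; equivalently $L^*=\bigoplus_{i\ge0}(L\cap\mathfrak{m}^iM+\mathfrak{m}^{i+1}M)/\mathfrak{m}^{i+1}M$. *)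

theory Defs
  imports Complex_Main
begin

text \<open>Commutative algebra in the type-class idiom: the ring R is a type 'a :: comm_ring_1,
  the module M is a type 'b :: ab_group_add with a scalar multiplication scale
  satisfying the locale module (from Main, theory Modules).\<close>

definition is_ideal :: "'a::comm_ring_1 set \<Rightarrow> bool" where
  "is_ideal I \<longleftrightarrow> module.subspace ((*) :: 'a \<Rightarrow> 'a \<Rightarrow> 'a) I"

definition ideal_gen :: "'a::comm_ring_1 set \<Rightarrow> 'a set" where
  "ideal_gen S = module.span ((*) :: 'a \<Rightarrow> 'a \<Rightarrow> 'a) S"

definition noetherian_ring :: "'a::comm_ring_1 itself \<Rightarrow> bool" where
  "noetherian_ring _ \<longleftrightarrow> (\<forall>I::'a set. is_ideal I \<longrightarrow> (\<exists>F. finite F \<and> I = ideal_gen F))"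

definition maximal_ideal :: "'a::comm_ring_1 set \<Rightarrow> bool" where
  "maximal_ideal m \<longleftrightarrow> is_ideal m \<and> m \<noteq> UNIV \<and>
     (\<forall>J. is_ideal J \<and> m \<subseteq> J \<longrightarrow> J = m \<or> J = UNIV)"

definition local_ring_with :: "'a::comm_ring_1 set \<Rightarrow> bool" where
  "local_ring_with m \<longleftrightarrow> maximal_ideal m \<and> (\<forall>J. maximal_ideal J \<longrightarrow> J = m)"

definition ideal_mult :: "'a::comm_ring_1 set \<Rightarrow> 'a set \<Rightarrow> 'a set" where
  "ideal_mult I J = ideal_gen {a * b | a b. a \<in> I \<and> b \<in> J}"

primrec ideal_pow :: "'a::comm_ring_1 set \<Rightarrow> nat \<Rightarrow> 'a set" where
  "ideal_pow I 0 = UNIV"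
| "ideal_pow I (Suc n) = ideal_mult I (ideal_pow I n)"

definition ideal_smult ::
  "('a::comm_ring_1 \<Rightarrow> 'b::ab_group_add \<Rightarrow> 'b) \<Rightarrow> 'a set \<Rightarrow> 'b set \<Rightarrow> 'b set" where
  "ideal_smult scale I N = module.span scale {scale r x | r x. r \<in> I \<and> x \<in> N}"

definition pow_mod :: "('a::comm_ring_1 \<Rightarrow> 'b::ab_group_add \<Rightarrow> 'b) \<Rightarrow> 'a set \<Rightarrow> nat \<Rightarrow> 'b set" where
  "pow_mod scale m n = ideal_smult scale (ideal_pow m n) UNIV"

definition finitely_generated_module :: "('a::comm_ring_1 \<Rightarrow> 'b::ab_group_add \<Rightarrow> 'b) \<Rightarrow> bool" where
  "finitely_generated_module scale \<longleftrightarrow> (\<exists>F. finite F \<and> module.span scale F = UNIV)"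

definition set_plus :: "'b::ab_group_add set \<Rightarrow> 'b set \<Rightarrow> 'b set" where
  "set_plus A B = {a + b | a b. a \<in> A \<and> b \<in> B}"

definition artin_rees_number ::
  "('a::comm_ring_1 \<Rightarrow> 'b::ab_group_add \<Rightarrow> 'b) \<Rightarrow> 'a set \<Rightarrow> 'b set \<Rightarrow> nat" where
  "artin_rees_number scale m L = (LEAST s. \<forall>n\<ge>s.
     pow_mod scale m n \<inter> L = ideal_smult scale (ideal_pow m (n - s)) (pow_mod scale m s \<inter> L))"

definition coset :: "'b::ab_group_add \<Rightarrow> 'b set \<Rightarrow> 'b set" where
  "coset x S = {x + y | y. y \<in> S}"

text \<open>Degree-i component of the initial module L^* inside gr_m(M):
  (L \<inter> m^i M + m^(i+1) M) / m^(i+1) M, represented as its set of cosets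
  x + m^(i+1) M in m^i M / m^(i+1) M.  L^* is the graded submodule with these components.\<close>
definition initial_module_comp ::
  "('a::comm_ring_1 \<Rightarrow> 'b::ab_group_add \<Rightarrow> 'b) \<Rightarrow> 'a set \<Rightarrow> 'b set \<Rightarrow> nat \<Rightarrow> 'b set set" where
  "initial_module_comp scale m L i =
     (\<lambda>x. coset x (pow_mod scale m (Suc i))) ` (L \<inter> pow_mod scale m i)"

definition initial_module_le ::
  "('a::comm_ring_1 \<Rightarrow> 'b::ab_group_add \<Rightarrow> 'b) \<Rightarrow> 'a set \<Rightarrow> 'b set \<Rightarrow> 'b set \<Rightarrow> bool" where
  "initial_module_le scale m L K \<longleftrightarrow>
     (\<forall>i. initial_module_comp scale m L i \<subseteq> initial_module_comp scale m K i)"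

end

theory Submission
  imports Defs "HOL-Library.Function_Algebras"
begin


lemma module_times: "module ((*) :: 'a::comm_ring_1 \<Rightarrow> 'a \<Rightarrow> 'a)"
  by unfold_locales (auto simp: algebra_simps)

inductive_set gen :: "('a::comm_ring_1 \<Rightarrow> 'v::ab_group_add \<Rightarrow> 'v) \<Rightarrow> ('v \<Rightarrow> 'v) set \<Rightarrow> 'v set \<Rightarrow> 'v set"
  for sc Ps G where
  gbase: "g \<in> G \<Longrightarrow> g \<in> gen sc Ps G"
| gzero: "0 \<in> gen sc Ps G"
| gadd: "x \<in> gen sc Ps G \<Longrightarrow> y \<in> gen sc Ps G \<Longrightarrow> x + y \<in> gen sc Ps G"
| gscale: "x \<in> gen sc Ps G \<Longrightarrow> sc c x \<in> gen sc Ps G"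
| gop: "\<phi> \<in> Ps \<Longrightarrow> x \<in> gen sc Ps G \<Longrightarrow> \<phi> x \<in> gen sc Ps G"

definition clsd :: "('a::comm_ring_1 \<Rightarrow> 'v::ab_group_add \<Rightarrow> 'v) \<Rightarrow> ('v \<Rightarrow> 'v) set \<Rightarrow> 'v set \<Rightarrow> bool" where
  "clsd sc Ps U \<longleftrightarrow> 0 \<in> U \<and> (\<forall>x\<in>U. \<forall>y\<in>U. x + y \<in> U) \<and> (\<forall>c. \<forall>x\<in>U. sc c x \<in> U)
     \<and> (\<forall>\<phi>\<in>Ps. \<forall>x\<in>U. \<phi> x \<in> U)"

definition noeth :: "('a::comm_ring_1 \<Rightarrow> 'v::ab_group_add \<Rightarrow> 'v) \<Rightarrow> ('v \<Rightarrow> 'v) set \<Rightarrow> 'v set \<Rightarrow> bool" where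
  "noeth sc Ps V \<longleftrightarrow> (\<forall>U. clsd sc Ps U \<and> U \<subseteq> V \<longrightarrow> (\<exists>G. finite G \<and> U = gen sc Ps G))"

lemma gen_minimal: "clsd sc Ps U \<Longrightarrow> G \<subseteq> U \<Longrightarrow> gen sc Ps G \<subseteq> U"
proof
  fix x assume c: "clsd sc Ps U" and GU: "G \<subseteq> U" and "x \<in> gen sc Ps G"
  from this(3) show "x \<in> U" by (induction rule: gen.induct) (use c GU in \<open>auto simp: clsd_def\<close>)
qed

lemma clsd_gen: "clsd sc Ps (gen sc Ps G)"
  unfolding clsd_def by (auto intro: gen.intros)

lemma gen_mono: "G \<subseteq> G' \<Longrightarrow> Ps \<subseteq> Ps' \<Longrightarrow> gen sc Ps G \<subseteq> gen sc Ps' G'"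
proof
  fix x assume a: "G \<subseteq> G'" "Ps \<subseteq> Ps'" and "x \<in> gen sc Ps G"
  from this(3) show "x \<in> gen sc Ps' G'" by (induction rule: gen.induct) (use a in \<open>auto intro: gen.intros\<close>)
qed

lemma gen_super: "G \<subseteq> gen sc Ps G" by (auto intro: gen.intros)

lemma noeth_acc:
  assumes n: "noeth sc Ps V" and cl: "\<And>d. clsd sc Ps (C d)" and sub: "\<And>d. C d \<subseteq> V"
    and mono: "\<And>d. C d \<subseteq> C (Suc d)"
  shows "\<exists>D. \<forall>d\<ge>D. C d = C D"
proof -
  have mo: "d \<le> d' \<Longrightarrow> C d \<subseteq> C d'" for d d' using mono by (rule lift_Suc_mono_le)
  let ?U = "\<Union>d. C d"
  have "clsd sc Ps ?U"
    unfolding clsd_def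
  proof (intro conjI ballI allI)
    show "0 \<in> ?U" using cl[of 0] by (auto simp: clsd_def)
    fix x y assume "x \<in> ?U" "y \<in> ?U"
    then obtain d1 d2 where "x \<in> C d1" "y \<in> C d2" by auto
    then have "x \<in> C (max d1 d2)" "y \<in> C (max d1 d2)" using mo[of d1 "max d1 d2"] mo[of d2 "max d1 d2"] by auto
    then show "x + y \<in> ?U" using cl[of "max d1 d2"] by (auto simp: clsd_def)
  next
    fix c x assume "x \<in> ?U" then obtain d where "x \<in> C d" by auto
    then have "sc c x \<in> C d" using cl[of d] unfolding clsd_def by blast
    then show "sc c x \<in> ?U" by blast
  next
    fix \<phi> x assume "\<phi> \<in> Ps" "x \<in> ?U" then obtain d where "x \<in> C d" by auto
    then have "\<phi> x \<in> C d" using cl[of d] \<open>\<phi> \<in> Ps\<close> unfolding clsd_def by blast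
    then show "\<phi> x \<in> ?U" by blast
  qed
  moreover have "?U \<subseteq> V" using sub by auto
  ultimately have "\<exists>G. finite G \<and> ?U = gen sc Ps G" using n unfolding noeth_def by simp
  then obtain G where G: "finite G" "?U = gen sc Ps G" by blast
  have "\<forall>g\<in>G. \<exists>d. g \<in> C d" using G gen_super by blast
  then obtain dg where dg: "\<And>g. g \<in> G \<Longrightarrow> g \<in> C (dg g)" by (rule bchoice[elim_format]) blast
  define D where "D = Max (insert 0 (dg ` G))"
  have "G \<subseteq> C D"
  proof
    fix g assume "g \<in> G"
    then have "dg g \<le> D" unfolding D_def using G(1) by auto
    then show "g \<in> C D" using dg[OF \<open>g \<in> G\<close>] mo by blast
  qed
  then have "?U \<subseteq> C D" using G(2) gen_minimal[OF cl] by simp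
  have "C d = C D" if "d \<ge> D" for d
  proof
    show "C D \<subseteq> C d" using mo[OF that] .
    show "C d \<subseteq> C D" using \<open>?U \<subseteq> C D\<close> by blast
  qed
  then show ?thesis by blast
qed



lemma clsd_neg: "module sc \<Longrightarrow> clsd sc Ps U \<Longrightarrow> x \<in> U \<Longrightarrow> - x \<in> U"
proof -
  assume m: "module sc" and c: "clsd sc Ps U" and x: "x \<in> U"
  have "sc (-1) x \<in> U" using c x unfolding clsd_def by blast
  moreover have "sc (-1) x = - x" using module.scale_minus_left[OF m, of 1 x] module.scale_one[OF m] by simp
  ultimately show ?thesis by simp
qed

lemma clsd_diff: "module sc \<Longrightarrow> clsd sc Ps U \<Longrightarrow> x \<in> U \<Longrightarrow> y \<in> U \<Longrightarrow> x - y \<in> U"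
  using clsd_neg[of sc Ps U y] unfolding clsd_def by (metis diff_conv_add_uminus)

lemma clsd_sum: "clsd sc Ps U \<Longrightarrow> (\<And>a. a \<in> A \<Longrightarrow> f a \<in> U) \<Longrightarrow> sum f A \<in> U"
proof (induction A rule: infinite_finite_induct)
  case (infinite A) then show ?case by (simp add: clsd_def)
next
  case empty then show ?case by (simp add: clsd_def)
next
  case (insert x F) then show ?case unfolding clsd_def by simp
qed

lemma gen_insert_decomp:
  assumes m: "module sc" and x: "x \<in> gen sc {} (insert f F)"
  shows "\<exists>c y. y \<in> gen sc {} F \<and> x = sc c f + y"
  using x
proof (induction rule: gen.induct)
  case (gbase g)
  then show ?case
  proof
    assume "g = f" then show ?thesis
      by (intro exI[of _ 1] exI[of _ 0]) (simp add: gen.gzero module.scale_one[OF m])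
  next
    assume "g \<in> F" then show ?thesis
      by (intro exI[of _ 0] exI[of _ g]) (simp add: gen.gbase module.scale_zero_left[OF m])
  qed
next
  case gzero
  then show ?case by (intro exI[of _ 0] exI[of _ 0]) (simp add: gen.gzero module.scale_zero_left[OF m])
next
  case (gadd x y)
  then obtain c1 y1 c2 y2 where "y1 \<in> gen sc {} F" "x = sc c1 f + y1" "y2 \<in> gen sc {} F" "y = sc c2 f + y2"
    by blast
  then show ?case
    by (intro exI[of _ "c1 + c2"] exI[of _ "y1 + y2"])
       (simp add: gen.gadd module.scale_left_distrib[OF m] algebra_simps)
next
  case (gscale x c)
  then obtain c1 y1 where "y1 \<in> gen sc {} F" "x = sc c1 f + y1" by blast
  then show ?case
    by (intro exI[of _ "c * c1"] exI[of _ "sc c y1"])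
       (simp add: gen.gscale module.scale_right_distrib[OF m] module.scale_scale[OF m])
next
  case (gop \<phi> x) then show ?case by simp
qed

lemma noeth_base:
  assumes nr: "noetherian_ring TYPE('a::comm_ring_1)" and m: "module (sc :: 'a \<Rightarrow> 'v::ab_group_add \<Rightarrow> 'v)"
    and F: "finite F"
  shows "noeth sc {} (gen sc {} F)"
  using F unfolding noeth_def
proof (induction F rule: finite_induct)
  case empty
  show ?case
  proof (intro allI impI)
    fix U assume U: "clsd sc {} U \<and> U \<subseteq> gen sc {} {}"
    have "gen sc {} {} \<subseteq> {0}" by (rule gen_minimal) (auto simp: clsd_def module.scale_zero_right[OF m])
    with U have "U = {0}" by (auto simp: clsd_def)
    moreover have "gen sc {} {} = {0}" using \<open>gen sc {} {} \<subseteq> {0}\<close> gen.gzero by blast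
    ultimately show "\<exists>G. finite G \<and> U = gen sc {} G" by (intro exI[of _ "{}"]) auto
  qed
next
  case (insert f F)
  show ?case
  proof (intro allI impI)
    fix U assume U: "clsd sc {} U \<and> U \<subseteq> gen sc {} (insert f F)"
    define I where "I = {c. \<exists>u\<in>U. \<exists>y\<in>gen sc {} F. u = sc c f + y}"
    have "is_ideal I"
      unfolding is_ideal_def module.subspace_def[OF module_times]
    proof (intro conjI ballI allI)
      show "0 \<in> I" unfolding I_def using U
        by (auto simp: clsd_def module.scale_zero_left[OF m] intro!: bexI[of _ 0] gen.gzero)
    next
      fix x y assume "x \<in> I" "y \<in> I"
      then obtain u1 y1 u2 y2 where "u1 \<in> U" "y1 \<in> gen sc {} F" "u1 = sc x f + y1"
        "u2 \<in> U" "y2 \<in> gen sc {} F" "u2 = sc y f + y2" unfolding I_def by blast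
      moreover have "u1 + u2 = sc (x + y) f + (y1 + y2)"
        using \<open>u1 = _\<close> \<open>u2 = _\<close> by (simp add: module.scale_left_distrib[OF m] algebra_simps)
      moreover have "u1 + u2 \<in> U" using U \<open>u1 \<in> U\<close> \<open>u2 \<in> U\<close> by (auto simp: clsd_def)
      moreover have "y1 + y2 \<in> gen sc {} F" using \<open>y1 \<in> _\<close> \<open>y2 \<in> _\<close> by (rule gen.gadd)
      ultimately show "x + y \<in> I" unfolding I_def by blast
    next
      fix c x assume "x \<in> I"
      then obtain u1 y1 where "u1 \<in> U" "y1 \<in> gen sc {} F" "u1 = sc x f + y1" unfolding I_def by blast
      moreover have "sc c u1 = sc (c * x) f + sc c y1"
        using \<open>u1 = _\<close> by (simp add: module.scale_right_distrib[OF m] module.scale_scale[OF m])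
      moreover have "sc c u1 \<in> U" using U \<open>u1 \<in> U\<close> by (auto simp: clsd_def)
      moreover have "sc c y1 \<in> gen sc {} F" using \<open>y1 \<in> _\<close> by (rule gen.gscale)
      ultimately show "c * x \<in> I" unfolding I_def by blast
    qed
    then obtain C where C: "finite C" "I = ideal_gen C" using nr unfolding noetherian_ring_def by blast
    have CI: "C \<subseteq> I" using C(2) module.span_superset[OF module_times] unfolding ideal_gen_def by blast
    have "\<forall>c\<in>C. \<exists>u y. u \<in> U \<and> y \<in> gen sc {} F \<and> u = sc c f + y" using CI unfolding I_def by blast
    then obtain uc yc where ucy: "\<And>c. c \<in> C \<Longrightarrow> uc c \<in> U \<and> yc c \<in> gen sc {} F \<and> uc c = sc c f + yc c"
      by metis
    define U' where "U' = U \<inter> gen sc {} F"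
    have "clsd sc {} U'" using U clsd_gen[of sc "{}" F] unfolding U'_def clsd_def by blast
    then obtain G' where G': "finite G'" "U' = gen sc {} G'" using insert.IH unfolding U'_def by blast
    define G where "G = G' \<union> uc ` C"
    have GU: "G \<subseteq> U" unfolding G_def using G' gen_super[of G' sc "{}"] ucy unfolding U'_def by blast
    have "U \<subseteq> gen sc {} G"
    proof
      fix u assume "u \<in> U"
      then obtain c y where cy: "y \<in> gen sc {} F" "u = sc c f + y"
        using gen_insert_decomp[OF m] U by blast
      then have "c \<in> I" unfolding I_def using \<open>u \<in> U\<close> by blast
      then obtain r where r: "c = (\<Sum>v\<in>C. r v * v)"
        using module.span_finite[OF module_times C(1)] C(2) unfolding ideal_gen_def by auto
      define w where "w = (\<Sum>v\<in>C. sc (r v) (uc v))"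
      have wG: "w \<in> gen sc {} G" unfolding w_def
        by (rule clsd_sum[OF clsd_gen]) (auto simp: G_def intro: gen.gscale gen.gbase)
      have wU: "w \<in> U" unfolding w_def
      proof (intro clsd_sum[of sc "{}"])
        show "clsd sc {} U" using U by blast
        fix v assume "v \<in> C" then have "uc v \<in> U" using ucy by blast
        then show "sc (r v) (uc v) \<in> U" using U unfolding clsd_def by blast
      qed
      have "w = (\<Sum>v\<in>C. sc (r v) (sc v f) + sc (r v) (yc v))"
        unfolding w_def by (rule sum.cong) (auto simp: ucy module.scale_right_distrib[OF m])
      also have "\<dots> = sc c f + (\<Sum>v\<in>C. sc (r v) (yc v))"
        by (simp add: sum.distrib r module.scale_sum_left[OF m] module.scale_scale[OF m])
      finally have "u - w = y - (\<Sum>v\<in>C. sc (r v) (yc v))" using cy by simp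
      also have "\<dots> \<in> gen sc {} F"
        by (intro clsd_diff[OF m clsd_gen] cy clsd_sum[OF clsd_gen] gen.gscale) (use ucy in auto)
      finally have "u - w \<in> gen sc {} F" .
      moreover have "u - w \<in> U" using clsd_diff[OF m _ \<open>u \<in> U\<close> wU] U by blast
      ultimately have "u - w \<in> U'" unfolding U'_def by blast
      then have "u - w \<in> gen sc {} G'" using G' by simp
      moreover have "gen sc {} G' \<subseteq> gen sc {} G" by (rule gen_mono) (auto simp: G_def)
      ultimately have "u - w \<in> gen sc {} G" by blast
      then have "(u - w) + w \<in> gen sc {} G" using wG by (rule gen.gadd)
      then show "u \<in> gen sc {} G" by simp
    qed
    moreover have "gen sc {} G \<subseteq> U" using gen_minimal[OF _ GU] U by blast
    moreover have "finite G" using G' C(1) unfolding G_def by blast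
    ultimately show "\<exists>G. finite G \<and> U = gen sc {} G" by blast
  qed
qed



definition scp :: "('a::comm_ring_1 \<Rightarrow> 'v::ab_group_add \<Rightarrow> 'v) \<Rightarrow> 'a \<Rightarrow> (nat \<Rightarrow> 'v) \<Rightarrow> (nat \<Rightarrow> 'v)" where
  "scp sc c w = (\<lambda>k. sc c (w k))"

definition liftp :: "('v \<Rightarrow> 'v) \<Rightarrow> (nat \<Rightarrow> 'v) \<Rightarrow> (nat \<Rightarrow> 'v)" where
  "liftp \<phi> w = (\<lambda>k. \<phi> (w k))"

definition shiftp :: "(nat \<Rightarrow> 'v::zero) \<Rightarrow> (nat \<Rightarrow> 'v)" where
  "shiftp w = (\<lambda>k. case k of 0 \<Rightarrow> 0 | Suc j \<Rightarrow> w j)"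

definition polys :: "'v::zero set \<Rightarrow> (nat \<Rightarrow> 'v) set" where
  "polys W0 = {w. (\<forall>k. w k \<in> W0) \<and> (\<exists>d. \<forall>k>d. w k = 0)}"

definition Psp :: "('v::zero \<Rightarrow> 'v) set \<Rightarrow> ((nat \<Rightarrow> 'v) \<Rightarrow> (nat \<Rightarrow> 'v)) set" where
  "Psp Ps = liftp ` Ps \<union> {shiftp}"

lemma scp_apply[simp]: "scp sc c w k = sc c (w k)" by (simp add: scp_def)
lemma liftp_apply[simp]: "liftp \<phi> w k = \<phi> (w k)" by (simp add: liftp_def)

lemma shiftp_pow: "((shiftp ^^ j) h) k = (if k < j then 0 else h (k - j))"
proof (induction j arbitrary: k)
  case 0 then show ?case by simp
next
  case (Suc j) then show ?case by (cases k) (auto simp: shiftp_def)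
qed

lemma shiftp_pow_gen: "h \<in> gen sc' (Psp Ps) H \<Longrightarrow> (shiftp ^^ j) h \<in> gen sc' (Psp Ps) H"
  by (induction j) (auto simp: Psp_def intro: gen.gop)

lemma hilbert:
  assumes m: "module sc" and z: "\<forall>\<phi>\<in>Ps. \<phi> 0 = 0" and n: "noeth sc Ps W0"
  shows "noeth (scp sc) (Psp Ps) (polys W0)"
  unfolding noeth_def
proof (intro allI impI)
  fix U assume UU: "clsd (scp sc) (Psp Ps) U \<and> U \<subseteq> polys W0"
  then have U: "clsd (scp sc) (Psp Ps) U" and Up: "U \<subseteq> polys W0" by auto
  define LC where "LC d = {w d | w. w \<in> U \<and> (\<forall>k>d. w k = 0)}" for d
  have LCc: "clsd sc Ps (LC d)" for d
    unfolding clsd_def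
  proof (intro conjI ballI allI)
    have "(0 :: nat \<Rightarrow> 'b) \<in> U" using U by (simp add: clsd_def)
    then show "0 \<in> LC d" unfolding LC_def by (intro CollectI exI[of _ 0]) auto
  next
    fix x y assume "x \<in> LC d" "y \<in> LC d"
    then obtain w1 w2 where "w1 \<in> U" "\<forall>k>d. w1 k = 0" "x = w1 d" "w2 \<in> U" "\<forall>k>d. w2 k = 0" "y = w2 d"
      unfolding LC_def by blast
    moreover have "w1 + w2 \<in> U" using U \<open>w1 \<in> U\<close> \<open>w2 \<in> U\<close> unfolding clsd_def by blast
    ultimately show "x + y \<in> LC d" unfolding LC_def by (intro CollectI exI[of _ "w1 + w2"]) auto
  next
    fix c x assume "x \<in> LC d"
    then obtain w1 where "w1 \<in> U" "\<forall>k>d. w1 k = 0" "x = w1 d" unfolding LC_def by blast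
    moreover have "scp sc c w1 \<in> U" using U \<open>w1 \<in> U\<close> unfolding clsd_def by blast
    ultimately show "sc c x \<in> LC d" unfolding LC_def
      by (intro CollectI exI[of _ "scp sc c w1"]) (auto simp: module.scale_zero_right[OF m])
  next
    fix \<phi> x assume "\<phi> \<in> Ps" "x \<in> LC d"
    then obtain w1 where "w1 \<in> U" "\<forall>k>d. w1 k = 0" "x = w1 d" unfolding LC_def by blast
    moreover have "liftp \<phi> w1 \<in> U" using U \<open>w1 \<in> U\<close> \<open>\<phi> \<in> Ps\<close> unfolding clsd_def Psp_def by blast
    ultimately show "\<phi> x \<in> LC d" unfolding LC_def using z \<open>\<phi> \<in> Ps\<close>
      by (intro CollectI exI[of _ "liftp \<phi> w1"]) auto
  qed
  have LCW: "LC d \<subseteq> W0" for d using Up unfolding LC_def polys_def by blast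
  have LCm: "LC d \<subseteq> LC (Suc d)" for d
  proof
    fix x assume "x \<in> LC d"
    then obtain w1 where "w1 \<in> U" "\<forall>k>d. w1 k = 0" "x = w1 d" unfolding LC_def by blast
    moreover have "shiftp w1 \<in> U" using U \<open>w1 \<in> U\<close> unfolding clsd_def Psp_def by blast
    moreover have "\<forall>k>Suc d. shiftp w1 k = 0" using \<open>\<forall>k>d. w1 k = 0\<close>
      by (auto simp: shiftp_def split: nat.split)
    ultimately show "x \<in> LC (Suc d)" unfolding LC_def
      by (intro CollectI exI[of _ "shiftp w1"]) (auto simp: shiftp_def)
  qed
  obtain D where D: "\<And>d. d \<ge> D \<Longrightarrow> LC d = LC D"
    using noeth_acc[of sc Ps W0 LC, OF n LCc LCW LCm] by blast
  have "\<forall>d. \<exists>G. finite G \<and> LC d = gen sc Ps G" using n LCc LCW unfolding noeth_def by blast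
  from choice[OF this] obtain Gd where Gd0: "\<forall>d. finite (Gd d) \<and> LC d = gen sc Ps (Gd d)" by blast
  then have Gd: "\<And>d. finite (Gd d) \<and> LC d = gen sc Ps (Gd d)" by blast
  have "\<forall>d. \<forall>g\<in>Gd d. \<exists>w. w \<in> U \<and> (\<forall>k>d. w k = 0) \<and> w d = g"
  proof (intro allI ballI)
    fix d g assume "g \<in> Gd d"
    then have "g \<in> LC d" using Gd[of d] gen_super[of "Gd d" sc Ps] by blast
    then show "\<exists>w. w \<in> U \<and> (\<forall>k>d. w k = 0) \<and> w d = g" unfolding LC_def by blast
  qed
  define wit where "wit d g = (SOME w. w \<in> U \<and> (\<forall>k>d. w k = 0) \<and> w d = g)" for d g
  have wit: "\<And>d g. g \<in> Gd d \<Longrightarrow> wit d g \<in> U \<and> (\<forall>k>d. wit d g k = 0) \<and> wit d g d = g"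
  proof -
    fix d g assume "g \<in> Gd d"
    then have "\<exists>w. w \<in> U \<and> (\<forall>k>d. w k = 0) \<and> w d = g" using \<open>\<forall>d. \<forall>g\<in>Gd d. _\<close> by blast
    then show "wit d g \<in> U \<and> (\<forall>k>d. wit d g k = 0) \<and> wit d g d = g"
      unfolding wit_def by (rule someI_ex)
  qed
  define H where "H = (\<Union>d\<in>{..D}. wit d ` Gd d)"
  have Hf: "finite H" unfolding H_def using Gd by auto
  have HU: "H \<subseteq> U" unfolding H_def using wit by auto
  have genU: "gen (scp sc) (Psp Ps) H \<subseteq> U" using gen_minimal[OF U HU] .
  have lift1: "\<exists>h\<in>gen (scp sc) (Psp Ps) H. (\<forall>k>d. h k = 0) \<and> h d = c"
    if "d \<le> D" "c \<in> gen sc Ps (Gd d)" for d c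
    using that(2)
  proof (induction rule: gen.induct)
    case (gbase g)
    then have "wit d g \<in> H" unfolding H_def using that(1) by auto
    moreover have "wit d g \<in> gen (scp sc) (Psp Ps) H" using calculation by (rule gen.gbase)
    ultimately show ?case using wit[OF gbase] by blast
  next
    case gzero
    have "(0::nat\<Rightarrow>'b) \<in> gen (scp sc) (Psp Ps) H" by (rule gen.gzero)
    moreover have "(\<forall>k>d. (0::nat\<Rightarrow>'b) k = 0) \<and> (0::nat\<Rightarrow>'b) d = 0" by simp
    ultimately show ?case by blast
  next
    case (gadd x y)
    then obtain h1 h2 where h: "h1 \<in> gen (scp sc) (Psp Ps) H" "(\<forall>k>d. h1 k = 0) \<and> h1 d = x"
      "h2 \<in> gen (scp sc) (Psp Ps) H" "(\<forall>k>d. h2 k = 0) \<and> h2 d = y" by blast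
    have "h1 + h2 \<in> gen (scp sc) (Psp Ps) H" using h(1,3) by (rule gen.gadd)
    moreover have "(\<forall>k>d. (h1 + h2) k = 0) \<and> (h1 + h2) d = x + y" using h(2,4) by simp
    ultimately show ?case by blast
  next
    case (gscale x c)
    then obtain h1 where h: "h1 \<in> gen (scp sc) (Psp Ps) H" "(\<forall>k>d. h1 k = 0) \<and> h1 d = x" by blast
    have "scp sc c h1 \<in> gen (scp sc) (Psp Ps) H" using h(1) by (rule gen.gscale)
    moreover have "(\<forall>k>d. scp sc c h1 k = 0) \<and> scp sc c h1 d = sc c x"
      using h(2) by (simp add: module.scale_zero_right[OF m])
    ultimately show ?case by blast
  next
    case (gop \<phi> x)
    then obtain h1 where h: "h1 \<in> gen (scp sc) (Psp Ps) H" "(\<forall>k>d. h1 k = 0) \<and> h1 d = x" by blast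
    have "liftp \<phi> \<in> Psp Ps" using gop(1) unfolding Psp_def by blast
    then have "liftp \<phi> h1 \<in> gen (scp sc) (Psp Ps) H" using h(1) by (rule gen.gop)
    moreover have "(\<forall>k>d. liftp \<phi> h1 k = 0) \<and> liftp \<phi> h1 d = \<phi> x"
      using h(2) z gop(1) by simp
    ultimately show ?case by blast
  qed
  have lift2: "\<exists>h\<in>gen (scp sc) (Psp Ps) H. (\<forall>k>d. h k = 0) \<and> h d = c"
    if "c \<in> LC d" for d c
  proof (cases "d \<le> D")
    case True then show ?thesis using lift1 Gd that by blast
  next
    case False
    then have "c \<in> gen sc Ps (Gd D)" using D[of d] Gd that by auto
    then obtain h where h: "h \<in> gen (scp sc) (Psp Ps) H" "\<forall>k>D. h k = 0" "h D = c"
      using lift1[of D c] by blast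
    show ?thesis
    proof (intro bexI[of _ "(shiftp ^^ (d - D)) h"] conjI allI impI)
      show "(shiftp ^^ (d - D)) h \<in> gen (scp sc) (Psp Ps) H" using shiftp_pow_gen[OF h(1)] .
      fix k assume "k > d" then show "(shiftp ^^ (d - D)) h k = 0" using h(2) False
        by (simp add: shiftp_pow)
    next
      show "(shiftp ^^ (d - D)) h d = c" using h(3) False by (auto simp: shiftp_pow)
    qed
  qed
  have main: "\<forall>u\<in>U. (\<forall>k\<ge>d. u k = 0) \<longrightarrow> u \<in> gen (scp sc) (Psp Ps) H" for d
  proof (induction d)
    case 0
    show ?case
    proof (intro ballI impI)
      fix u :: "nat \<Rightarrow> 'b" assume "\<forall>k\<ge>0. u k = 0" then have "u = 0" by auto
      then show "u \<in> gen (scp sc) (Psp Ps) H" by (simp add: gen.gzero)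
    qed
  next
    case (Suc d)
    show ?case
    proof (intro ballI impI)
      fix u :: "nat \<Rightarrow> 'b" assume u: "u \<in> U" "\<forall>k\<ge>Suc d. u k = 0"
      then have "u d \<in> LC d" unfolding LC_def by auto
      then obtain h where h: "h \<in> gen (scp sc) (Psp Ps) H" "\<forall>k>d. h k = 0" "h d = u d"
        using lift2 by blast
      have hU: "h \<in> U" using h(1) genU by blast
      have eq: "scp sc (-1) h = - h" unfolding scp_def
        using module.scale_minus_left[OF m, of 1] module.scale_one[OF m] by (auto simp: fun_eq_iff)
      have "u + scp sc (-1) h \<in> U" using U u(1) hU unfolding clsd_def by blast
      then have vU: "u - h \<in> U" using eq by simp
      have "\<forall>k\<ge>d. (u - h) k = 0"
      proof (intro allI impI)
        fix k assume "k \<ge> d"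
        then show "(u - h) k = 0" using u(2) h(2,3) by (cases "k = d") auto
      qed
      then have "u - h \<in> gen (scp sc) (Psp Ps) H" using Suc.IH vU by blast
      then have "(u - h) + h \<in> gen (scp sc) (Psp Ps) H" using h(1) by (rule gen.gadd)
      then show "u \<in> gen (scp sc) (Psp Ps) H" by simp
    qed
  qed
  have "U \<subseteq> gen (scp sc) (Psp Ps) H"
  proof
    fix u assume "u \<in> U"
    then obtain d where "\<forall>k>d. u k = 0" using Up unfolding polys_def by blast
    then have "\<forall>k\<ge>Suc d. u k = 0" by auto
    then show "u \<in> gen (scp sc) (Psp Ps) H" using main \<open>u \<in> U\<close> by blast
  qed
  then show "\<exists>G. finite G \<and> U = gen (scp sc) (Psp Ps) G" using genU Hf by blast
qed



definition addl :: "('v::ab_group_add \<Rightarrow> 'v) \<Rightarrow> bool" where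
  "addl f \<longleftrightarrow> (\<forall>x y. f (x + y) = f x + f y)"

definition linr :: "('a::comm_ring_1 \<Rightarrow> 'v::ab_group_add \<Rightarrow> 'v) \<Rightarrow> ('v \<Rightarrow> 'v) \<Rightarrow> bool" where
  "linr sc f \<longleftrightarrow> addl f \<and> (\<forall>c x. f (sc c x) = sc c (f x))"

definition ev :: "('v::ab_group_add \<Rightarrow> 'v) \<Rightarrow> (nat \<Rightarrow> 'v) \<Rightarrow> 'v" where
  "ev \<psi> w = (\<Sum>k | w k \<noteq> 0. (\<psi> ^^ k) (w k))"

lemma addl_zero: "addl f \<Longrightarrow> f 0 = 0"
  unfolding addl_def by (metis add_cancel_right_right add_0)

lemma addl_sum: "addl f \<Longrightarrow> f (sum g A) = (\<Sum>a\<in>A. f (g a))"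
proof (induction A rule: infinite_finite_induct)
  case (infinite A) then show ?case by (simp add: addl_zero)
next
  case empty then show ?case by (simp add: addl_zero)
next
  case (insert x F) then show ?case by (simp add: addl_def)
qed

lemma linr_pow: "linr sc \<psi> \<Longrightarrow> linr sc (\<psi> ^^ k)"
  by (induction k) (auto simp: linr_def addl_def)

lemma comm_pow: "(\<And>x. \<phi> (\<psi> x) = \<psi> (\<phi> x)) \<Longrightarrow> \<phi> ((\<psi> ^^ k) x) = (\<psi> ^^ k) (\<phi> x)"
  by (induction k) auto

lemma ev_bound:
  assumes l: "linr sc \<psi>" and d: "\<forall>k>d. w k = 0"
  shows "ev \<psi> w = (\<Sum>k\<le>d. (\<psi> ^^ k) (w k))"
  unfolding ev_def
proof (rule sum.mono_neutral_left)
  show "finite {..d}" by simp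
  show "{k. w k \<noteq> 0} \<subseteq> {..d}" using d by (auto simp: not_less[symmetric])
  show "\<forall>i\<in>{..d} - {k. w k \<noteq> 0}. (\<psi> ^^ i) (w i) = 0"
    using addl_zero linr_pow[OF l] unfolding linr_def by auto
qed

lemma polys_bound: "w \<in> polys W0 \<Longrightarrow> \<exists>d. \<forall>k>d. w k = 0"
  unfolding polys_def by blast

lemma ev_add:
  assumes l: "linr sc \<psi>" and "w1 \<in> polys W0" "w2 \<in> polys W0"
  shows "ev \<psi> (w1 + w2) = ev \<psi> w1 + ev \<psi> w2"
proof -
  obtain d1 d2 where d: "\<forall>k>d1. w1 k = 0" "\<forall>k>d2. w2 k = 0" using assms polys_bound by metis
  let ?d = "max d1 d2"
  have "ev \<psi> (w1 + w2) = (\<Sum>k\<le>?d. (\<psi> ^^ k) ((w1 + w2) k))" using d by (intro ev_bound[OF l]) auto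
  also have "\<dots> = (\<Sum>k\<le>?d. (\<psi> ^^ k) (w1 k)) + (\<Sum>k\<le>?d. (\<psi> ^^ k) (w2 k))"
    using linr_pow[OF l] by (simp add: linr_def addl_def sum.distrib)
  also have "\<dots> = ev \<psi> w1 + ev \<psi> w2"
  proof -
    have "ev \<psi> w1 = (\<Sum>k\<le>?d. (\<psi> ^^ k) (w1 k))" by (rule ev_bound[OF l]) (use d in auto)
    moreover have "ev \<psi> w2 = (\<Sum>k\<le>?d. (\<psi> ^^ k) (w2 k))" by (rule ev_bound[OF l]) (use d in auto)
    ultimately show ?thesis by simp
  qed
  finally show ?thesis .
qed

lemma ev_scale:
  assumes m: "module sc" and l: "linr sc \<psi>" and "w \<in> polys W0"
  shows "ev \<psi> (scp sc c w) = sc c (ev \<psi> w)"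
proof -
  obtain d where d: "\<forall>k>d. w k = 0" using assms polys_bound by metis
  have "ev \<psi> (scp sc c w) = (\<Sum>k\<le>d. (\<psi> ^^ k) (sc c (w k)))"
    using d by (subst ev_bound[OF l, of d]) (auto simp: module.scale_zero_right[OF m])
  also have "\<dots> = sc c (\<Sum>k\<le>d. (\<psi> ^^ k) (w k))"
    using linr_pow[OF l] by (simp add: linr_def module.scale_sum_right[OF m])
  also have "\<dots> = sc c (ev \<psi> w)" using d by (simp add: ev_bound[OF l])
  finally show ?thesis .
qed

lemma ev_lift:
  assumes l: "linr sc \<psi>" and lp: "linr sc \<phi>" and c: "\<And>x. \<phi> (\<psi> x) = \<psi> (\<phi> x)" and "w \<in> polys W0"
  shows "ev \<psi> (liftp \<phi> w) = \<phi> (ev \<psi> w)"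
proof -
  obtain d where d: "\<forall>k>d. w k = 0" using assms polys_bound by metis
  have z: "\<phi> 0 = 0" using lp addl_zero linr_def by blast
  have "ev \<psi> (liftp \<phi> w) = (\<Sum>k\<le>d. (\<psi> ^^ k) (\<phi> (w k)))"
    using d z by (subst ev_bound[OF l, of d]) auto
  also have "\<dots> = \<phi> (\<Sum>k\<le>d. (\<psi> ^^ k) (w k))"
    using lp by (simp add: linr_def addl_sum comm_pow[of \<phi> \<psi>, OF c])
  also have "\<dots> = \<phi> (ev \<psi> w)" using d by (simp add: ev_bound[OF l])
  finally show ?thesis .
qed

lemma ev_shift:
  assumes l: "linr sc \<psi>" and "w \<in> polys W0"
  shows "ev \<psi> (shiftp w) = \<psi> (ev \<psi> w)"
proof -
  obtain d where d: "\<forall>k>d. w k = 0" using assms polys_bound by metis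
  have d': "\<forall>k>Suc d. shiftp w k = 0" using d by (auto simp: shiftp_def split: nat.split)
  have z: "\<psi> 0 = 0" using l addl_zero linr_def by blast
  have "ev \<psi> (shiftp w) = (\<Sum>k\<le>Suc d. (\<psi> ^^ k) (shiftp w k))" using d' by (rule ev_bound[OF l])
  also have "\<dots> = (\<Sum>k\<le>d. (\<psi> ^^ Suc k) (w k))"
    by (subst sum.atMost_Suc_shift) (simp add: shiftp_def)
  also have "\<dots> = \<psi> (\<Sum>k\<le>d. (\<psi> ^^ k) (w k))"
    using l by (simp add: linr_def addl_sum funpow_swap1)
  also have "\<dots> = \<psi> (ev \<psi> w)" using d by (simp add: ev_bound[OF l])
  finally show ?thesis .
qed



lemma noeth_step:
  assumes m: "module sc" and lP: "\<forall>\<phi>\<in>Ps. linr sc \<phi>" and l: "linr sc \<psi>"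
    and c: "\<forall>\<phi>\<in>Ps. \<forall>x. \<phi> (\<psi> x) = \<psi> (\<phi> x)" and n: "noeth sc Ps (gen sc Ps F)"
  shows "noeth sc (insert \<psi> Ps) (gen sc (insert \<psi> Ps) F)"
  unfolding noeth_def
proof (intro allI impI)
  define W0 where "W0 = gen sc Ps F"
  have z: "\<forall>\<phi>\<in>Ps. \<phi> 0 = 0" using lP addl_zero unfolding linr_def by blast
  have hil: "noeth (scp sc) (Psp Ps) (polys W0)" unfolding W0_def by (rule hilbert[OF m z n])
  have pz: "0 \<in> polys W0" unfolding polys_def W0_def by (auto intro: gen.gzero)
  have padd: "w1 + w2 \<in> polys W0" if th: "w1 \<in> polys W0" "w2 \<in> polys W0" for w1 w2
  proof -
    obtain d1 d2 where "\<forall>k>d1. w1 k = 0" "\<forall>k>d2. w2 k = 0" using th polys_bound by metis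
    then have "\<forall>k>max d1 d2. (w1 + w2) k = 0" by simp
    moreover have "\<forall>k. (w1 + w2) k \<in> W0" using that unfolding polys_def W0_def by (auto intro: gen.gadd)
    ultimately show ?thesis unfolding polys_def by blast
  qed
  have pscale: "scp sc c w \<in> polys W0" if th: "w \<in> polys W0" for c w
  proof -
    obtain d where "\<forall>k>d. w k = 0" using th polys_bound by metis
    then have "\<forall>k>d. scp sc c w k = 0" by (simp add: module.scale_zero_right[OF m])
    moreover have "\<forall>k. scp sc c w k \<in> W0" using that unfolding polys_def W0_def by (auto intro: gen.gscale)
    ultimately show ?thesis unfolding polys_def by blast
  qed
  have plift: "liftp \<phi> w \<in> polys W0" if th: "w \<in> polys W0" "\<phi> \<in> Ps" for \<phi> w
  proof -
    obtain d where "\<forall>k>d. w k = 0" using th polys_bound by metis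
    then have "\<forall>k>d. liftp \<phi> w k = 0" using z that(2) by simp
    moreover have "\<forall>k. liftp \<phi> w k \<in> W0" using that unfolding polys_def W0_def by (auto intro: gen.gop)
    ultimately show ?thesis unfolding polys_def by blast
  qed
  have pshift: "shiftp w \<in> polys W0" if th: "w \<in> polys W0" for w
  proof -
    obtain d where "\<forall>k>d. w k = 0" using th polys_bound by metis
    then have "\<forall>k>Suc d. shiftp w k = 0" by (auto simp: shiftp_def split: nat.split)
    moreover have "\<forall>k. shiftp w k \<in> W0" using that unfolding polys_def W0_def
      by (auto intro: gen.gzero simp: shiftp_def split: nat.split)
    ultimately show ?thesis unfolding polys_def by blast
  qed
  have ev0: "ev \<psi> 0 = 0" unfolding ev_def by simp
  have lphi1: "linr sc \<phi>" if "\<phi> \<in> Ps" for \<phi> using lP that by auto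
  have lphi2: "\<phi> (\<psi> x) = \<psi> (\<phi> x)" if "\<phi> \<in> Ps" for \<phi> x using c that by auto
  have surj: "x \<in> ev \<psi> ` polys W0" if "x \<in> gen sc (insert \<psi> Ps) F" for x
    using that
  proof (induction rule: gen.induct)
    case (gbase g)
    define w where "w = (\<lambda>k::nat. if k = 0 then g else 0)"
    have "w \<in> polys W0" unfolding polys_def W0_def w_def using gbase by (auto intro: gen.gbase gen.gzero)
    moreover have "ev \<psi> w = g" by (subst ev_bound[OF l, of 0]) (auto simp: w_def)
    ultimately show ?case by (metis image_eqI)
  next
    case gzero then show ?case using pz ev0 by (metis image_eqI)
  next
    case (gadd x y)
    then obtain w1 w2 where "w1 \<in> polys W0" "x = ev \<psi> w1" "w2 \<in> polys W0" "y = ev \<psi> w2" by blast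
    then show ?case using ev_add[OF l, of w1 W0 w2] padd by (metis image_eqI)
  next
    case (gscale x c)
    then obtain w1 where "w1 \<in> polys W0" "x = ev \<psi> w1" by blast
    then show ?case using ev_scale[OF m l, of w1 W0 c] pscale by (metis image_eqI)
  next
    case (gop \<phi> x)
    then obtain w1 where w1: "w1 \<in> polys W0" "x = ev \<psi> w1" by blast
    show ?case
    proof (cases "\<phi> = \<psi>")
      case True
      then show ?thesis using ev_shift[OF l w1(1)] pshift[OF w1(1)] w1(2) by (metis image_eqI)
    next
      case False
      then have "\<phi> \<in> Ps" using gop(1) by blast
      then show ?thesis using ev_lift[OF l lphi1[OF \<open>\<phi> \<in> Ps\<close>] lphi2[OF \<open>\<phi> \<in> Ps\<close>] w1(1)] plift[OF w1(1)] w1(2) by (metis image_eqI)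
    qed
  qed
  fix U assume UU: "clsd sc (insert \<psi> Ps) U \<and> U \<subseteq> gen sc (insert \<psi> Ps) F"
  then have U: "clsd sc (insert \<psi> Ps) U" and Us: "U \<subseteq> gen sc (insert \<psi> Ps) F" by auto
  define P where "P = {w \<in> polys W0. ev \<psi> w \<in> U}"
  have "clsd (scp sc) (Psp Ps) P"
    unfolding clsd_def
  proof (intro conjI ballI allI)
    show "0 \<in> P" unfolding P_def using pz ev0 U by (auto simp: clsd_def)
  next
    fix x y assume "x \<in> P" "y \<in> P"
    then show "x + y \<in> P" unfolding P_def using padd ev_add[OF l, of x W0 y] U
      by (auto simp: clsd_def)
  next
    fix c x assume "x \<in> P"
    then show "scp sc c x \<in> P" unfolding P_def using pscale ev_scale[OF m l, of x W0 c] U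
      by (auto simp: clsd_def)
  next
    fix \<chi> x assume "\<chi> \<in> Psp Ps" "x \<in> P"
    then consider "\<chi> = shiftp" | \<phi> where "\<phi> \<in> Ps" "\<chi> = liftp \<phi>" unfolding Psp_def by blast
    then show "\<chi> x \<in> P"
    proof cases
      case 1 then show ?thesis using \<open>x \<in> P\<close> pshift ev_shift[OF l, of x W0] U
        unfolding P_def by (auto simp: clsd_def)
    next
      case 2
      have "ev \<psi> (liftp \<phi> x) = \<phi> (ev \<psi> x)" using \<open>x \<in> P\<close> ev_lift[OF l lphi1[OF 2(1)] lphi2[OF 2(1)]] unfolding P_def by blast
      then show ?thesis using \<open>x \<in> P\<close> plift[OF _ 2(1)] U 2 unfolding P_def by (auto simp: clsd_def)
    qed
  qed
  moreover have "P \<subseteq> polys W0" unfolding P_def by blast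
  ultimately obtain H where H: "finite H" "P = gen (scp sc) (Psp Ps) H" using hil unfolding noeth_def by blast
  have evH: "ev \<psi> ` H \<subseteq> U" using H(2) gen_super[of H "scp sc" "Psp Ps"] unfolding P_def by blast
  have backw: "ev \<psi> w \<in> gen sc (insert \<psi> Ps) (ev \<psi> ` H)" if "w \<in> gen (scp sc) (Psp Ps) H" for w
    using that
  proof (induction rule: gen.induct)
    case (gbase g) then show ?case by (auto intro: gen.gbase)
  next
    case gzero then show ?case using ev0 zero_fun_def gen.gzero[of sc "insert \<psi> Ps" "ev \<psi> ` H"] by (simp add: ev_def)
  next
    case (gadd x y)
    then have "x \<in> polys W0" "y \<in> polys W0" using H(2) unfolding P_def by auto
    then show ?case using gadd ev_add[OF l] by (metis gen.gadd)
  next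
    case (gscale x c)
    then have "x \<in> polys W0" using H(2) unfolding P_def by auto
    then show ?case using gscale ev_scale[OF m l] by (metis gen.gscale)
  next
    case (gop \<chi> x)
    then have x: "x \<in> polys W0" using H(2) unfolding P_def by auto
    from gop(1) consider "\<chi> = shiftp" | \<phi> where "\<phi> \<in> Ps" "\<chi> = liftp \<phi>" unfolding Psp_def by blast
    then show ?case
    proof cases
      case 1 then show ?thesis using gop(3) ev_shift[OF l x] by (metis gen.gop insertI1)
    next
      case 2 then show ?thesis using gop(3) ev_lift[OF l lphi1[OF 2(1)] lphi2[OF 2(1)] x] by (metis gen.gop insertI2)
    qed
  qed
  have "U \<subseteq> gen sc (insert \<psi> Ps) (ev \<psi> ` H)"
  proof
    fix u assume "u \<in> U"
    then obtain w where "w \<in> polys W0" "u = ev \<psi> w" using surj Us by blast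
    then have "w \<in> P" unfolding P_def using \<open>u \<in> U\<close> by blast
    then show "u \<in> gen sc (insert \<psi> Ps) (ev \<psi> ` H)" using backw H(2) \<open>u = ev \<psi> w\<close> by blast
  qed
  moreover have "gen sc (insert \<psi> Ps) (ev \<psi> ` H) \<subseteq> U" using gen_minimal[OF U evH] .
  ultimately show "\<exists>G. finite G \<and> U = gen sc (insert \<psi> Ps) G" using H(1) by blast
qed

lemma noeth_gen:
  assumes nr: "noetherian_ring TYPE('a::comm_ring_1)" and m: "module (sc :: 'a \<Rightarrow> 'v::ab_group_add \<Rightarrow> 'v)"
    and fP: "finite Ps" and lP: "\<forall>\<phi>\<in>Ps. linr sc \<phi>" and c: "\<forall>\<phi>\<in>Ps. \<forall>\<chi>\<in>Ps. \<forall>x. \<phi> (\<chi> x) = \<chi> (\<phi> x)"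
    and F: "finite F"
  shows "noeth sc Ps (gen sc Ps F)"
  using fP lP c
proof (induction Ps rule: finite_induct)
  case empty then show ?case using noeth_base[OF nr m F] by simp
next
  case (insert \<psi> Ps)
  show ?case
  proof (rule noeth_step[OF m])
    show "\<forall>\<phi>\<in>Ps. linr sc \<phi>" "linr sc \<psi>" using insert.prems by auto
    show "\<forall>\<phi>\<in>Ps. \<forall>x. \<phi> (\<psi> x) = \<psi> (\<phi> x)" using insert.prems by auto
    show "noeth sc Ps (gen sc Ps F)" using insert.IH insert.prems by auto
  qed
qed



lemma ideal_subspace_pow: "is_ideal m \<Longrightarrow> module.subspace ((*) :: 'a::comm_ring_1 \<Rightarrow> _) (ideal_pow m n)"
  by (cases n) (auto simp: ideal_mult_def ideal_gen_def module.subspace_UNIV[OF module_times]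
        module.subspace_span[OF module_times])

lemma ideal_pow_Suc_sub: "is_ideal m \<Longrightarrow> ideal_pow m (Suc n) \<subseteq> ideal_pow (m :: 'a::comm_ring_1 set) n"
proof -
  assume "is_ideal m"
  then have S: "module.subspace ((*) :: 'a \<Rightarrow> _) (ideal_pow m n)" by (rule ideal_subspace_pow)
  have "{a * b |a b. a \<in> m \<and> b \<in> ideal_pow m n} \<subseteq> ideal_pow m n"
    using module.subspace_scale[OF module_times S] by auto
  then show ?thesis unfolding ideal_pow.simps ideal_mult_def ideal_gen_def
    using module.span_minimal[OF module_times _ S] by blast
qed

lemma ideal_pow_anti:
  assumes "is_ideal m" "k \<le> n" shows "ideal_pow m n \<subseteq> ideal_pow (m :: 'a::comm_ring_1 set) k"
  using assms(2)
proof (induction n rule: dec_induct)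
  case base then show ?case by simp
next
  case (step n) then show ?case using ideal_pow_Suc_sub[OF assms(1), of n] by blast
qed

lemma scale_coeff_subspace:
  assumes ms: "module scale" and S: "module.subspace scale S"
  shows "module.subspace ((*) :: 'a::comm_ring_1 \<Rightarrow> _) {r. scale r y \<in> S}"
  unfolding module.subspace_def[OF module_times]
  using module.subspace_0[OF ms S] module.subspace_add[OF ms S] module.subspace_scale[OF ms S]
  by (auto simp: module.scale_left_distrib[OF ms] module.scale_scale[OF ms, symmetric] module.scale_zero_left[OF ms])

context
  fixes scale :: "'a::comm_ring_1 \<Rightarrow> 'b::ab_group_add \<Rightarrow> 'b" and m :: "'a set"
  assumes ms: "module scale" and mi: "is_ideal m"
begin

lemma pow_mod_subspace: "module.subspace scale (pow_mod scale m n)"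
  unfolding pow_mod_def ideal_smult_def by (rule module.subspace_span[OF ms])

lemma ideal_smult_subspace: "module.subspace scale (ideal_smult scale I X)"
  unfolding ideal_smult_def by (rule module.subspace_span[OF ms])

lemma I3:
  assumes a: "a \<in> m" and y: "y \<in> ideal_smult scale (ideal_pow m j) X"
  shows "scale a y \<in> ideal_smult scale (ideal_pow m (Suc j)) X"
proof -
  let ?T = "{y. scale a y \<in> ideal_smult scale (ideal_pow m (Suc j)) X}"
  have "module.subspace scale ?T"
    unfolding module.subspace_def[OF ms]
    using module.subspace_0[OF ms ideal_smult_subspace] module.subspace_add[OF ms ideal_smult_subspace]
      module.subspace_scale[OF ms ideal_smult_subspace]
    by (auto simp: module.scale_right_distrib[OF ms] module.scale_left_commute[OF ms])
  moreover have "{scale r x | r x. r \<in> ideal_pow m j \<and> x \<in> X} \<subseteq> ?T"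
  proof safe
    fix r x assume "r \<in> ideal_pow m j" "x \<in> X"
    then have "a * r \<in> ideal_pow m (Suc j)" unfolding ideal_pow.simps ideal_mult_def ideal_gen_def
      using a by (intro module.span_base[OF module_times]) blast
    then have "scale (a * r) x \<in> ideal_smult scale (ideal_pow m (Suc j)) X"
      unfolding ideal_smult_def using \<open>x \<in> X\<close> by (intro module.span_base[OF ms]) blast
    then show "scale a (scale r x) \<in> ideal_smult scale (ideal_pow m (Suc j)) X"
      by (simp add: module.scale_scale[OF ms])
  qed
  ultimately show ?thesis using y unfolding ideal_smult_def
    using module.span_minimal[OF ms] by blast
qed

lemma I3': "a \<in> m \<Longrightarrow> y \<in> pow_mod scale m j \<Longrightarrow> scale a y \<in> pow_mod scale m (Suc j)"
  unfolding pow_mod_def by (rule I3)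

lemma I4: "r \<in> ideal_pow m k \<Longrightarrow> x \<in> pow_mod scale m s \<Longrightarrow> scale r x \<in> pow_mod scale m (k + s)"
proof (induction k arbitrary: r x)
  case 0 then show ?case using module.subspace_scale[OF ms pow_mod_subspace] by simp
next
  case (Suc k)
  let ?R = "{r. scale r x \<in> pow_mod scale m (Suc k + s)}"
  have sub: "module.subspace ((*) :: 'a \<Rightarrow> _) ?R" by (rule scale_coeff_subspace[OF ms pow_mod_subspace])
  have "{a * b |a b. a \<in> m \<and> b \<in> ideal_pow m k} \<subseteq> ?R"
  proof safe
    fix a b assume "a \<in> m" "b \<in> ideal_pow m k"
    then have "scale b x \<in> pow_mod scale m (k + s)" using Suc by blast
    then have "scale a (scale b x) \<in> pow_mod scale m (Suc (k + s))" using I3' \<open>a \<in> m\<close> by blast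
    then show "scale (a * b) x \<in> pow_mod scale m (Suc k + s)" by (simp add: module.scale_scale[OF ms])
  qed
  then show ?case using Suc.prems(1) module.span_minimal[OF module_times _ sub]
    unfolding ideal_pow.simps ideal_mult_def ideal_gen_def by blast
qed

lemma pow_mod_anti: "k \<le> n \<Longrightarrow> pow_mod scale m n \<subseteq> pow_mod scale m k"
  unfolding pow_mod_def ideal_smult_def
  by (rule module.span_mono[OF ms]) (use ideal_pow_anti[OF mi] in blast)

lemma I6: "module.subspace scale L \<Longrightarrow>
    ideal_smult scale (ideal_pow m k) (pow_mod scale m s \<inter> L) \<subseteq> pow_mod scale m (k + s) \<inter> L"
  unfolding ideal_smult_def
  apply (rule module.span_minimal[OF ms])
  using I4 module.subspace_scale[OF ms] module.subspace_inter[OF ms pow_mod_subspace]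
  by auto

lemma I8: "X \<subseteq> ideal_smult scale (ideal_pow m 0) X"
proof
  fix x assume "x \<in> X"
  then have "scale 1 x \<in> ideal_smult scale (ideal_pow m 0) X" unfolding ideal_smult_def
    by (intro module.span_base[OF ms]) auto
  then show "x \<in> ideal_smult scale (ideal_pow m 0) X" by (simp add: module.scale_one[OF ms])
qed

lemma I7: "pow_mod scale m 0 = UNIV"
  using I8[of UNIV] unfolding pow_mod_def by blast

end



definition rop :: "('a::comm_ring_1 \<Rightarrow> 'b::ab_group_add \<Rightarrow> 'b) \<Rightarrow> 'a \<Rightarrow> (nat \<Rightarrow> 'b) \<Rightarrow> (nat \<Rightarrow> 'b)" where
  "rop scale a v = (\<lambda>n. case n of 0 \<Rightarrow> 0 | Suc j \<Rightarrow> scale a (v j))"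

definition dl :: "nat \<Rightarrow> 'b::zero \<Rightarrow> (nat \<Rightarrow> 'b)" where
  "dl n x = (\<lambda>k. if k = n then x else 0)"

lemma module_scp: "module scale \<Longrightarrow> module (scp scale)"
  unfolding module_def scp_def by (auto simp: fun_eq_iff)

lemma linr_rop: assumes "module scale" shows "linr (scp scale) (rop scale a)"
  unfolding linr_def addl_def rop_def
  by (auto simp: fun_eq_iff module.scale_right_distrib[OF assms] module.scale_left_commute[OF assms]
     module.scale_zero_right[OF assms] split: nat.split)

lemma rop_comm: assumes "module scale" shows "rop scale a (rop scale b v) = rop scale b (rop scale a v)"
  unfolding rop_def by (auto simp: fun_eq_iff module.scale_left_commute[OF assms]
     module.scale_zero_right[OF assms] split: nat.split)

lemma artin_rees_exists:
  fixes scale :: "'a::comm_ring_1 \<Rightarrow> 'b::ab_group_add \<Rightarrow> 'b" and m :: "'a set"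
  assumes nr: "noetherian_ring TYPE('a)" and ms: "module scale" and mi: "is_ideal m"
    and fg: "finitely_generated_module scale" and Ls: "module.subspace scale L"
  shows "\<exists>s. \<forall>n\<ge>s. pow_mod scale m n \<inter> L
            = ideal_smult scale (ideal_pow m (n - s)) (pow_mod scale m s \<inter> L)"
proof -
  obtain A where A: "finite A" "m = ideal_gen A" using nr mi unfolding noetherian_ring_def by blast
  obtain E where E: "finite E" "module.span scale E = UNIV" using fg unfolding finitely_generated_module_def by blast
  have Am: "A \<subseteq> m" using A(2) module.span_superset[OF module_times] unfolding ideal_gen_def by blast
  define Ps where "Ps = rop scale ` A"
  define F where "F = dl 0 ` E"
  define V where "V = gen (scp scale) Ps F"
  have mscp: "module (scp scale)" by (rule module_scp[OF ms])
  have nV: "noeth (scp scale) Ps V" unfolding V_def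
  proof (rule noeth_gen[OF nr mscp])
    show "finite Ps" "finite F" using A E unfolding Ps_def F_def by auto
    show "\<forall>\<phi>\<in>Ps. linr (scp scale) \<phi>" unfolding Ps_def using linr_rop[OF ms] by blast
    show "\<forall>\<phi>\<in>Ps. \<forall>\<chi>\<in>Ps. \<forall>x. \<phi> (\<chi> x) = \<chi> (\<phi> x)" unfolding Ps_def using rop_comm[OF ms] by blast
  qed
  have Vinv: "(\<forall>n. v n \<in> pow_mod scale m n) \<and> (\<exists>d. \<forall>n>d. v n = 0)" if "v \<in> V" for v
    using that unfolding V_def
  proof (induction rule: gen.induct)
    case (gbase g)
    then obtain e where "g = dl 0 e" unfolding F_def by blast
    then show ?case using I7[OF ms mi] module.subspace_0[OF ms pow_mod_subspace[OF ms mi]]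
      by (auto simp: dl_def intro!: exI[of _ 0])
  next
    case gzero then show ?case using module.subspace_0[OF ms pow_mod_subspace[OF ms mi]] by auto
  next
    case (gadd x y)
    then obtain d1 d2 where "\<forall>n>d1. x n = 0" "\<forall>n>d2. y n = 0" by blast
    then have "\<forall>n>max d1 d2. (x + y) n = 0" by auto
    then have "\<exists>d. \<forall>n>d. (x + y) n = 0" by blast
    moreover have "\<forall>n. (x + y) n \<in> pow_mod scale m n"
      using gadd module.subspace_add[OF ms pow_mod_subspace[OF ms mi]] by auto
    ultimately show ?case by blast
  next
    case (gscale x c)
    then obtain d1 where "\<forall>n>d1. x n = 0" by blast
    then have "\<forall>n>d1. scp scale c x n = 0" by (simp add: module.scale_zero_right[OF ms])
    then have "\<exists>d. \<forall>n>d. scp scale c x n = 0" by blast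
    moreover have "\<forall>n. scp scale c x n \<in> pow_mod scale m n"
      using gscale module.subspace_scale[OF ms pow_mod_subspace[OF ms mi]] by auto
    ultimately show ?case by blast
  next
    case (gop \<phi> x)
    then obtain a where a: "a \<in> A" "\<phi> = rop scale a" unfolding Ps_def by blast
    obtain d1 where "\<forall>n>d1. x n = 0" using gop by blast
    then have "\<forall>n>Suc d1. \<phi> x n = 0" using a by (auto simp: rop_def module.scale_zero_right[OF ms] split: nat.split)
    moreover have "\<forall>n. \<phi> x n \<in> pow_mod scale m n"
    proof
      fix n show "\<phi> x n \<in> pow_mod scale m n"
        using a gop I3'[OF ms mi, of a] Am module.subspace_0[OF ms pow_mod_subspace[OF ms mi]]
        by (cases n) (auto simp: rop_def)
    qed
    ultimately show ?case by blast
  qed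
  have dlS: "module.subspace scale {x. dl n x \<in> V}" for n
    unfolding module.subspace_def[OF ms]
  proof (intro conjI ballI allI; clarify?)
    have "dl n 0 = 0" by (simp add: dl_def fun_eq_iff)
    then show "dl n 0 \<in> V" unfolding V_def using gen.gzero by metis
  next
    fix x y assume "dl n x \<in> V" "dl n y \<in> V"
    moreover have "dl n (x + y) = dl n x + dl n y" by (simp add: dl_def fun_eq_iff)
    ultimately show "dl n (x + y) \<in> V" unfolding V_def using gen.gadd by metis
  next
    fix c x assume "dl n x \<in> V"
    moreover have "dl n (scale c x) = scp scale c (dl n x)"
      by (simp add: dl_def fun_eq_iff module.scale_zero_right[OF ms])
    ultimately show "dl n (scale c x) \<in> V" unfolding V_def using gen.gscale by metis
  qed
  have emb: "dl n x \<in> V" if "x \<in> pow_mod scale m n" for n x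
    using that
  proof (induction n arbitrary: x)
    case 0
    have "E \<subseteq> {x. dl 0 x \<in> V}" unfolding V_def F_def by (auto intro: gen.gbase)
    then have "module.span scale E \<subseteq> {x. dl 0 x \<in> V}" using module.span_minimal[OF ms _ dlS] by blast
    then show ?case using E(2) by blast
  next
    case (Suc n)
    let ?S = "{x. dl (Suc n) x \<in> V}"
    have key: "scale a z \<in> ?S" if kz: "a \<in> m" "z \<in> pow_mod scale m n" for a z
    proof -
      have sub: "module.subspace ((*) :: 'a \<Rightarrow> _) {r. scale r z \<in> ?S}"
        by (rule scale_coeff_subspace[OF ms dlS])
      have "A \<subseteq> {r. scale r z \<in> ?S}"
      proof
        fix a assume "a \<in> A"
        have "dl n z \<in> V" using Suc.IH kz(2) by blast
        moreover have "rop scale a \<in> Ps" unfolding Ps_def using \<open>a \<in> A\<close> by blast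
        ultimately have "rop scale a (dl n z) \<in> V" unfolding V_def by (rule gen.gop[rotated])
        moreover have "rop scale a (dl n z) = dl (Suc n) (scale a z)"
          by (auto simp: rop_def dl_def fun_eq_iff module.scale_zero_right[OF ms] split: nat.split)
        ultimately show "a \<in> {r. scale r z \<in> ?S}" by simp
      qed
      then have "m \<subseteq> {r. scale r z \<in> ?S}" using A(2) module.span_minimal[OF module_times _ sub]
        unfolding ideal_gen_def by blast
      then show ?thesis using kz(1) by blast
    qed
    have "{scale r y | r y. r \<in> ideal_pow m (Suc n) \<and> y \<in> UNIV} \<subseteq> ?S"
    proof safe
      fix r y assume r: "r \<in> ideal_pow m (Suc n)"
      have sub: "module.subspace ((*) :: 'a \<Rightarrow> _) {r. scale r y \<in> ?S}"
        by (rule scale_coeff_subspace[OF ms dlS])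
      have "{a * b |a b. a \<in> m \<and> b \<in> ideal_pow m n} \<subseteq> {r. scale r y \<in> ?S}"
      proof safe
        fix a b assume "a \<in> m" "b \<in> ideal_pow m n"
        then have "scale b y \<in> pow_mod scale m n" unfolding pow_mod_def ideal_smult_def
          by (intro module.span_base[OF ms]) blast
        then have "scale a (scale b y) \<in> ?S" using key \<open>a \<in> m\<close> by blast
        then show "dl (Suc n) (scale (a * b) y) \<in> V" by (simp add: module.scale_scale[OF ms])
      qed
      then have "ideal_pow m (Suc n) \<subseteq> {r. scale r y \<in> ?S}"
        unfolding ideal_pow.simps ideal_mult_def ideal_gen_def
        using module.span_minimal[OF module_times _ sub] by blast
      then show "dl (Suc n) (scale r y) \<in> V" using r by blast
    qed
    then have "pow_mod scale m (Suc n) \<subseteq> ?S" unfolding pow_mod_def ideal_smult_def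
      using module.span_minimal[OF ms _ dlS] by blast
    then show ?case using Suc.prems by blast
  qed
  define U where "U = {v \<in> V. \<forall>n. v n \<in> L}"
  have "clsd (scp scale) Ps U"
    unfolding clsd_def
  proof (intro conjI ballI allI)
    have "0 \<in> V" unfolding V_def by (rule gen.gzero)
    moreover have "\<forall>n. (0::nat \<Rightarrow> 'b) n \<in> L" using module.subspace_0[OF ms Ls] by simp
    ultimately show "0 \<in> U" unfolding U_def by blast
  next
    fix x y assume "x \<in> U" "y \<in> U"
    then have "x \<in> V" "\<forall>n. x n \<in> L" "y \<in> V" "\<forall>n. y n \<in> L" unfolding U_def by auto
    moreover have "x + y \<in> V" using \<open>x \<in> V\<close> \<open>y \<in> V\<close> unfolding V_def by (rule gen.gadd)
    ultimately show "x + y \<in> U" unfolding U_def using module.subspace_add[OF ms Ls] by auto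
  next
    fix c x assume "x \<in> U"
    then have "x \<in> V" "\<forall>n. x n \<in> L" unfolding U_def by auto
    moreover have "scp scale c x \<in> V" using \<open>x \<in> V\<close> unfolding V_def by (rule gen.gscale)
    ultimately show "scp scale c x \<in> U" unfolding U_def using module.subspace_scale[OF ms Ls] by auto
  next
    fix \<phi> x assume "\<phi> \<in> Ps" "x \<in> U"
    then have "x \<in> V" "\<forall>n. x n \<in> L" unfolding U_def by auto
    have "\<phi> x \<in> V" using \<open>\<phi> \<in> Ps\<close> \<open>x \<in> V\<close> unfolding V_def by (rule gen.gop)
    moreover have "\<phi> x n \<in> L" for n
    proof -
      obtain a where a: "\<phi> = rop scale a" using \<open>\<phi> \<in> Ps\<close> unfolding Ps_def by blast
      show ?thesis using \<open>\<forall>n. x n \<in> L\<close> module.subspace_0[OF ms Ls] module.subspace_scale[OF ms Ls]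
        unfolding a rop_def by (cases n) auto
    qed
    ultimately show "\<phi> x \<in> U" unfolding U_def by blast
  qed
  moreover have "U \<subseteq> V" unfolding U_def by blast
  ultimately obtain G where G: "finite G" "U = gen (scp scale) Ps G" using nV unfolding noeth_def by blast
  have GU: "G \<subseteq> U" using G(2) gen_super by blast
  define bd where "bd g = (SOME d. \<forall>n>d. g n = 0)" for g :: "nat \<Rightarrow> 'b"
  have bd: "\<forall>n>bd g. g n = 0" if "g \<in> G" for g
  proof -
    have "\<exists>d. \<forall>n>d. g n = 0" using Vinv GU that unfolding U_def by blast
    then show ?thesis unfolding bd_def by (rule someI_ex)
  qed
  define s where "s = Max (insert 0 (bd ` G))"
  have Gs: "\<forall>n>s. g n = 0" if "g \<in> G" for g
  proof -
    have "bd g \<le> s" unfolding s_def using G(1) that by auto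
    then show ?thesis using bd[OF that] by auto
  qed
  define Q where "Q n = (if n < s then pow_mod scale m n \<inter> L
      else ideal_smult scale (ideal_pow m (n - s)) (pow_mod scale m s \<inter> L))" for n
  have Qs: "module.subspace scale (Q n)" for n
    unfolding Q_def using module.subspace_inter[OF ms pow_mod_subspace[OF ms mi] Ls] ideal_smult_subspace[OF ms mi]
    by auto
  have inv: "\<forall>n. v n \<in> Q n" if "v \<in> gen (scp scale) Ps G" for v
    using that
  proof (induction rule: gen.induct)
    case (gbase g)
    then have "g \<in> V" "\<forall>n. g n \<in> L" using GU unfolding U_def by auto
    then have gp: "g n \<in> pow_mod scale m n \<inter> L" for n using Vinv by blast
    show ?case
    proof
      fix n
      consider "n < s" | "n = s" | "n > s" by linarith
      then show "g n \<in> Q n"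
      proof cases
        case 1 then show ?thesis using gp unfolding Q_def by auto
      next
        case 2 then show ?thesis using gp[of s] I8[OF ms mi, of "pow_mod scale m s \<inter> L"] unfolding Q_def by auto
      next
        case 3 then show ?thesis using Gs[OF gbase] module.subspace_0[OF ms Qs] by simp
      qed
    qed
  next
    case gzero then show ?case using module.subspace_0[OF ms Qs] by simp
  next
    case (gadd x y) then show ?case using module.subspace_add[OF ms Qs] by simp
  next
    case (gscale x c) then show ?case using module.subspace_scale[OF ms Qs] by simp
  next
    case (gop \<phi> x)
    then obtain a where a: "a \<in> A" "\<phi> = rop scale a" unfolding Ps_def by blast
    then have am: "a \<in> m" using Am by blast
    show ?case
    proof
      fix n
      show "\<phi> x n \<in> Q n"
      proof (cases n)
        case 0 then show ?thesis using a module.subspace_0[OF ms Qs] by (simp add: rop_def)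
      next
        case (Suc j)
        have xj: "x j \<in> Q j" using gop.IH by blast
        have eq: "\<phi> x n = scale a (x j)" using a Suc by (simp add: rop_def)
        show ?thesis
        proof (cases "j < s")
          case True
          then have "x j \<in> pow_mod scale m j \<inter> L" using xj unfolding Q_def by simp
          then have "scale a (x j) \<in> pow_mod scale m (Suc j) \<inter> L"
            using I3'[OF ms mi am] module.subspace_scale[OF ms Ls] by blast
          show ?thesis
          proof (cases "Suc j < s")
            case True then show ?thesis unfolding eq Q_def using Suc \<open>scale a (x j) \<in> _\<close> by auto
          next
            case False
            then have "Suc j = s" using \<open>j < s\<close> by simp
            then have "scale a (x j) \<in> pow_mod scale m s \<inter> L" using \<open>scale a (x j) \<in> _\<close> by simp
            then show ?thesis unfolding eq Q_def using Suc False \<open>Suc j = s\<close>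
              I8[OF ms mi, of "pow_mod scale m s \<inter> L"] by auto
          qed
        next
          case False
          then have "x j \<in> ideal_smult scale (ideal_pow m (j - s)) (pow_mod scale m s \<inter> L)"
            using xj unfolding Q_def by simp
          then have "scale a (x j) \<in> ideal_smult scale (ideal_pow m (Suc (j - s))) (pow_mod scale m s \<inter> L)"
            by (rule I3[OF ms mi am])
          moreover have "Suc (j - s) = n - s" using False Suc by simp
          ultimately show ?thesis unfolding eq Q_def using Suc False by auto
        qed
      qed
    qed
  qed
  show ?thesis
  proof (intro exI[of _ s] allI impI)
    fix n assume "n \<ge> s"
    show "pow_mod scale m n \<inter> L = ideal_smult scale (ideal_pow m (n - s)) (pow_mod scale m s \<inter> L)"
    proof
      show "ideal_smult scale (ideal_pow m (n - s)) (pow_mod scale m s \<inter> L) \<subseteq> pow_mod scale m n \<inter> L"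
        using I6[OF ms mi Ls, of "n - s" s] \<open>n \<ge> s\<close> by simp
    next
      show "pow_mod scale m n \<inter> L \<subseteq> ideal_smult scale (ideal_pow m (n - s)) (pow_mod scale m s \<inter> L)"
      proof
        fix x assume x: "x \<in> pow_mod scale m n \<inter> L"
        have "dl n x \<in> U" unfolding U_def using emb x module.subspace_0[OF ms Ls] by (auto simp: dl_def)
        then have "dl n x n \<in> Q n" using inv G(2) by blast
        then show "x \<in> ideal_smult scale (ideal_pow m (n - s)) (pow_mod scale m s \<inter> L)"
          using \<open>n \<ge> s\<close> unfolding Q_def by (simp add: dl_def)
      qed
    qed
  qed
qed



lemma coset_eq:
  assumes ms: "module scale" and P: "module.subspace scale P" and d: "x - k \<in> P"
  shows "coset x P = coset k P"
proof -
  have "x + y \<in> coset k P" if "y \<in> P" for y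
  proof -
    have "(x - k) + y \<in> P" using module.subspace_add[OF ms P d that] .
    moreover have "x + y = k + ((x - k) + y)" by simp
    ultimately show ?thesis unfolding coset_def by blast
  qed
  moreover have "k + y \<in> coset x P" if "y \<in> P" for y
  proof -
    have "y - (x - k) \<in> P" using module.subspace_diff[OF ms P that d] .
    moreover have "k + y = x + (y - (x - k))" by simp
    ultimately show ?thesis unfolding coset_def by blast
  qed
  ultimately show ?thesis unfolding coset_def by blast
qed

theorem proposition3p1:
  fixes scale :: "'a::comm_ring_1 \<Rightarrow> 'b::ab_group_add \<Rightarrow> 'b"
    and m :: "'a set" and L K :: "'b set" and N :: nat
  assumes "noetherian_ring TYPE('a)"
    and "local_ring_with m"
    and "module scale"
    and "finitely_generated_module scale"
    and "module.subspace scale L"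
    and "module.subspace scale K"
    and "N > artin_rees_number scale m L"
    and "set_plus L (pow_mod scale m N) = set_plus K (pow_mod scale m N)"
  shows "initial_module_le scale m L K"
proof -
  note nr = assms(1) and ms = assms(3) and fg = assms(4) and Ls = assms(5) and Ks = assms(6)
  have mi: "is_ideal m" using assms(2) unfolding local_ring_with_def maximal_ideal_def by blast
  define s0 where "s0 = artin_rees_number scale m L"
  have Ps0: "\<forall>n\<ge>s0. pow_mod scale m n \<inter> L = ideal_smult scale (ideal_pow m (n - s0)) (pow_mod scale m s0 \<inter> L)"
    unfolding s0_def artin_rees_number_def by (rule LeastI_ex[OF artin_rees_exists[OF nr ms mi fg Ls]])
  have sN: "s0 < N" using assms(7) unfolding s0_def .
  have dec: "\<exists>k\<in>K. \<exists>z\<in>pow_mod scale m N. l = k + z" if "l \<in> L" for l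
  proof -
    have "l + 0 \<in> set_plus L (pow_mod scale m N)" unfolding set_plus_def
      using that module.subspace_0[OF ms pow_mod_subspace[OF ms mi]] by blast
    then show ?thesis using assms(8) unfolding set_plus_def by auto
  qed
  show ?thesis
    unfolding initial_module_le_def initial_module_comp_def
  proof (intro allI subsetI)
    fix i c assume "c \<in> (\<lambda>x. coset x (pow_mod scale m (Suc i))) ` (L \<inter> pow_mod scale m i)"
    then obtain x where x: "x \<in> L" "x \<in> pow_mod scale m i" "c = coset x (pow_mod scale m (Suc i))" by blast
    define T where "T = {y. \<exists>k\<in>K \<inter> pow_mod scale m i. y - k \<in> pow_mod scale m (Suc i)}"
    have PS: "module.subspace scale (pow_mod scale m n)" for n by (rule pow_mod_subspace[OF ms mi])
    have Tmem: "y \<in> T" if "k \<in> K" "k \<in> pow_mod scale m i" "y - k \<in> pow_mod scale m (Suc i)" for y k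
      unfolding T_def using that by blast
    have "x \<in> T"
    proof (cases "i < N")
      case True
      obtain k z where kz: "k \<in> K" "z \<in> pow_mod scale m N" "x = k + z" using dec[OF x(1)] by blast
      have z1: "z \<in> pow_mod scale m (Suc i)" using kz(2) pow_mod_anti[OF ms mi, of "Suc i" N] True by auto
      then have "z \<in> pow_mod scale m i" using pow_mod_anti[OF ms mi, of i "Suc i"] by auto
      then have "k \<in> pow_mod scale m i" using module.subspace_diff[OF ms PS x(2)] kz(3)
        by (metis add_diff_cancel_right')
      then have "k \<in> K \<inter> pow_mod scale m i" using kz(1) by blast
      moreover have "x - k \<in> pow_mod scale m (Suc i)" using kz(3) z1 by simp
      ultimately show ?thesis unfolding T_def by blast
    next
      case False
      have "s0 \<le> i" using False sN by simp
      then have "pow_mod scale m i \<inter> L = ideal_smult scale (ideal_pow m (i - s0)) (pow_mod scale m s0 \<inter> L)"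
        using Ps0 by blast
      then have "x \<in> ideal_smult scale (ideal_pow m (i - s0)) (pow_mod scale m s0 \<inter> L)"
        using x(1,2) by blast
      moreover have "module.subspace scale T"
        unfolding module.subspace_def[OF ms]
      proof (intro conjI ballI allI)
        show "0 \<in> T" using module.subspace_0[OF ms Ks] module.subspace_0[OF ms PS]
          by (intro Tmem[of 0]) auto
      next
        fix y1 y2 assume "y1 \<in> T" "y2 \<in> T"
        then obtain k1 k2 where "k1 \<in> K \<inter> pow_mod scale m i" "y1 - k1 \<in> pow_mod scale m (Suc i)"
          "k2 \<in> K \<inter> pow_mod scale m i" "y2 - k2 \<in> pow_mod scale m (Suc i)" unfolding T_def by blast
        moreover have eq: "(y1 + y2) - (k1 + k2) = (y1 - k1) + (y2 - k2)" by simp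
        ultimately have "(y1 + y2) - (k1 + k2) \<in> pow_mod scale m (Suc i)"
          unfolding eq using module.subspace_add[OF ms PS] by blast
        moreover have "k1 + k2 \<in> K" "k1 + k2 \<in> pow_mod scale m i"
          using \<open>k1 \<in> _\<close> \<open>k2 \<in> _\<close> module.subspace_add[OF ms Ks] module.subspace_add[OF ms PS] by auto
        ultimately show "y1 + y2 \<in> T" by (intro Tmem[of "k1 + k2"])
      next
        fix c y assume "y \<in> T"
        then obtain k where "k \<in> K \<inter> pow_mod scale m i" "y - k \<in> pow_mod scale m (Suc i)" unfolding T_def by blast
        moreover have eq: "scale c y - scale c k = scale c (y - k)" by (simp add: module.scale_right_diff_distrib[OF ms])
        ultimately have "scale c y - scale c k \<in> pow_mod scale m (Suc i)"
          unfolding eq using module.subspace_scale[OF ms PS] by blast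
        moreover have "scale c k \<in> K" "scale c k \<in> pow_mod scale m i"
          using \<open>k \<in> _\<close> module.subspace_scale[OF ms Ks] module.subspace_scale[OF ms PS] by auto
        ultimately show "scale c y \<in> T" by (intro Tmem[of "scale c k"])
      qed
      moreover have "{scale r l | r l. r \<in> ideal_pow m (i - s0) \<and> l \<in> pow_mod scale m s0 \<inter> L} \<subseteq> T"
      proof safe
        fix r l assume r: "r \<in> ideal_pow m (i - s0)" and l: "l \<in> pow_mod scale m s0" "l \<in> L"
        obtain k z where kz: "k \<in> K" "z \<in> pow_mod scale m N" "l = k + z" using dec[OF l(2)] by blast
        have "z \<in> pow_mod scale m s0" using kz(2) pow_mod_anti[OF ms mi, of s0 N] sN by (meson less_imp_le subsetD)
        then have "k \<in> pow_mod scale m s0" using module.subspace_diff[OF ms PS l(1)] kz(3)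
          by (metis add_diff_cancel_right')
        then have "scale r k \<in> pow_mod scale m (i - s0 + s0)" using I4[OF ms mi r] by blast
        moreover have "i - s0 + s0 = i" using False sN by simp
        ultimately have k1: "scale r k \<in> pow_mod scale m i" by simp
        have "scale r z \<in> pow_mod scale m (i - s0 + N)" using I4[OF ms mi r kz(2)] .
        moreover have "Suc i \<le> i - s0 + N" using False sN by simp
        ultimately have z1: "scale r z \<in> pow_mod scale m (Suc i)"
          using pow_mod_anti[OF ms mi, of "Suc i" "i - s0 + N"] by blast
        have "scale r l - scale r k = scale r z" using kz(3) by (simp add: module.scale_right_distrib[OF ms])
        then show "scale r l \<in> T" using k1 z1 module.subspace_scale[OF ms Ks kz(1)]
          by (intro Tmem[of "scale r k"]) auto
      qed
      ultimately show ?thesis unfolding ideal_smult_def using module.span_minimal[OF ms] by (meson subsetD)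
    qed
    then obtain k where k: "k \<in> K" "k \<in> pow_mod scale m i" "x - k \<in> pow_mod scale m (Suc i)"
      unfolding T_def by blast
    have "c = coset k (pow_mod scale m (Suc i))" using x(3) coset_eq[OF ms PS k(3)] by simp
    then show "c \<in> (\<lambda>x. coset x (pow_mod scale m (Suc i))) ` (K \<inter> pow_mod scale m i)" using k by blast
  qed
qed


end
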